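(* Let $M$ be a smooth compact manifold with distance $d$ induced by a Riemannian metric. Every topologically stable IFS $\omega:\Lambda\times M\to M$ has the shadowing property.
   Context: An IFS with phase space $M$ is given by a compact metric space $\Lambda$ and a continuous map $\omega:\Lambda\times M\to M$; $\omega_\lambda=\omega(\lambda,\cdot)$. For $\sigma=(\lambda_1,\lambda_2,\dots)$, $\omega_{\sigma_0}=\mathrm{id}$, $\omega_{\sigma_k}=\omega_{\lambda_k}\circ\cdots\circ\omega_{\lambda_1}$. A chain is a sequence $\{y_k\}_{k\ge0}$ with $y_k=\omega_{\lambda_k}(y_{k-1})$ for some $\lambda_k\in\Lambda$, $k\ge1$. A $\delta$-chain is a sequence $\{x_k\}_{k\ge0}$ such that for each $k\ge1$ there is $\lambda_k$ with $d(x_k,\omega_{\lambda_k}(x_{k-1}))\le\delta$. Shadowing property: for every $\varepsilon>0$ there is $\delta>0$ such that for every $\delta$-chain $\{x_k\}$ there is a chain $\{y_k\}$ with $d(x_k,y_k)<\varepsilon$ for all $k\ge0$. $d_{C^0}(f,g)=\max_x d(f(x),g(x))$; $d_H(\omega,\tilde\omega)$ is the Hausdorff distance w.r.t. $d_{C^0}$ between $\{\omega_\lambda:\lambda\in\Lambda\}$ and $\{\tilde\omega_\lambda:\lambda\in\tilde\Lambda\}$. A pair $(\sigma,\tilde\sigma)$ of sequences in $\Lambda$ and $\tilde\Lambda$ is $\delta$-compatible if $d_{C^0}(\omega_{\lambda_k},\tilde\omega_{\tilde\lambda_k})<\delta$ for all $k$. Topologically stable: for every $\varepsilon>0$ there is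 $\delta>0$ such that whenever $\tilde\omega$ is an IFS on $M$ (any compact metric parameter space $\tilde\Lambda$) with $d_H(\omega,\tilde\omega)\le\delta$, then for each $\delta$-compatible pair $(\sigma,\tilde\sigma)\in\Lambda^{\mathbb N}\times\tilde\Lambda^{\mathbb N}$ there is a continuous $h:M\to M$ with $d_{C^0}(\omega_{\sigma_k}\circ h,\tilde\omega_{\tilde\sigma_k})<\varepsilon$ for all $k\in\mathbb N$ and $d_{C^0}(h,\mathrm{id})<\varepsilon$. *)

theory Defs
  imports "HOL-Analysis.Analysis"
begin

section \<open>Smooth compact manifolds, realised as embedded submanifolds of Euclidean space\<close>

fun Ck_on :: "nat \<Rightarrow> 'a::euclidean_space set \<Rightarrow> ('a \<Rightarrow> 'b::euclidean_space) \<Rightarrow> bool" where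
  "Ck_on 0 U f = continuous_on U f"
| "Ck_on (Suc k) U f =
     (f differentiable_on U \<and> (\<forall>b\<in>Basis. Ck_on k U (\<lambda>x. frechet_derivative f (at x) b)))"

definition smooth_on :: "'a::euclidean_space set \<Rightarrow> ('a \<Rightarrow> 'b::euclidean_space) \<Rightarrow> bool" where
  "smooth_on U f \<longleftrightarrow> (\<forall>k. Ck_on k U f)"

definition smooth_submanifold :: "nat \<Rightarrow> 'a::euclidean_space set \<Rightarrow> bool" where
  "smooth_submanifold k M \<longleftrightarrow>
     (\<forall>p\<in>M. \<exists>U V (\<phi>::'a \<Rightarrow> 'a) \<psi> S.
        open U \<and> p \<in> U \<and> open V \<and> smooth_on U \<phi> \<and> smooth_on V \<psi> \<and>
        \<phi> ` U = V \<and> (\<forall>x\<in>U. \<psi> (\<phi> x) = x) \<and> (\<forall>y\<in>V. \<phi> (\<psi> y) = y) \<and>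
        subspace S \<and> dim S = k \<and> \<phi> ` (U \<inter> M) = V \<inter> S)"

text \<open>Length of a curve (supremum of inscribed polygon lengths) and the induced
  intrinsic (Riemannian) distance on M; it is \<infinity> between different components.\<close>
definition curve_length :: "(real \<Rightarrow> 'a::metric_space) \<Rightarrow> ereal" where
  "curve_length \<gamma> =
     (SUP p \<in> {(n, t::nat \<Rightarrow> real). t 0 = 0 \<and> t n = 1 \<and> (\<forall>i<n. t i \<le> t (Suc i))}.
        ereal (\<Sum>i<fst p. dist (\<gamma> (snd p (Suc i))) (\<gamma> (snd p i))))"

definition riem_dist :: "'a::real_normed_vector set \<Rightarrow> 'a \<Rightarrow> 'a \<Rightarrow> ereal" where
  "riem_dist M x y =
     (INF \<gamma> \<in> {\<gamma>. path \<gamma> \<and> path_image \<gamma> \<subseteq> M \<and> pathstart \<gamma> = x \<and> pathfinish \<gamma> = y}.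
        curve_length \<gamma>)"

definition is_IFS :: "'a::topological_space set \<Rightarrow> 'l::metric_space set \<Rightarrow> ('l \<Rightarrow> 'a \<Rightarrow> 'a) \<Rightarrow> bool" where
  "is_IFS M \<Lambda> \<omega> \<longleftrightarrow> compact \<Lambda> \<and> continuous_on (\<Lambda> \<times> M) (\<lambda>(l, x). \<omega> l x) \<and>
     (\<forall>l\<in>\<Lambda>. \<forall>x\<in>M. \<omega> l x \<in> M)"

definition dC0 :: "'a set \<Rightarrow> ('a \<Rightarrow> 'a \<Rightarrow> ereal) \<Rightarrow> ('a \<Rightarrow> 'a) \<Rightarrow> ('a \<Rightarrow> 'a) \<Rightarrow> ereal" where
  "dC0 M d f g = (SUP x\<in>M. d (f x) (g x))"

definition dH :: "'a set \<Rightarrow> ('a \<Rightarrow> 'a \<Rightarrow> ereal) \<Rightarrow> 'l set \<Rightarrow> ('l \<Rightarrow> 'a \<Rightarrow> 'a)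
                   \<Rightarrow> 'm set \<Rightarrow> ('m \<Rightarrow> 'a \<Rightarrow> 'a) \<Rightarrow> ereal" where
  "dH M d \<Lambda> \<omega> \<Lambda>' \<omega>' =
     max (SUP l\<in>\<Lambda>. INF l'\<in>\<Lambda>'. dC0 M d (\<omega> l) (\<omega>' l'))
         (SUP l'\<in>\<Lambda>'. INF l\<in>\<Lambda>. dC0 M d (\<omega> l) (\<omega>' l'))"

text \<open>omega_seq \<omega> \<sigma> k = \<omega>_{\<lambda>_k} \<circ> ... \<circ> \<omega>_{\<lambda>_1}, where \<lambda>_{i+1} = \<sigma> i.\<close>
fun omega_seq :: "('l \<Rightarrow> 'a \<Rightarrow> 'a) \<Rightarrow> (nat \<Rightarrow> 'l) \<Rightarrow> nat \<Rightarrow> 'a \<Rightarrow> 'a" where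
  "omega_seq \<omega> \<sigma> 0 = id"
| "omega_seq \<omega> \<sigma> (Suc k) = \<omega> (\<sigma> k) \<circ> omega_seq \<omega> \<sigma> k"

definition is_delta_chain :: "'a set \<Rightarrow> ('a \<Rightarrow> 'a \<Rightarrow> ereal) \<Rightarrow> 'l set \<Rightarrow> ('l \<Rightarrow> 'a \<Rightarrow> 'a)
                               \<Rightarrow> real \<Rightarrow> (nat \<Rightarrow> 'a) \<Rightarrow> bool" where
  "is_delta_chain M d \<Lambda> \<omega> \<delta> x \<longleftrightarrow> (\<forall>k. x k \<in> M) \<and>
     (\<forall>k. \<exists>l\<in>\<Lambda>. d (x (Suc k)) (\<omega> l (x k)) \<le> ereal \<delta>)"

definition is_chain :: "'a set \<Rightarrow> 'l set \<Rightarrow> ('l \<Rightarrow> 'a \<Rightarrow> 'a) \<Rightarrow> (nat \<Rightarrow> 'a) \<Rightarrow> bool" where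
  "is_chain M \<Lambda> \<omega> y \<longleftrightarrow> (\<forall>k. y k \<in> M) \<and> (\<forall>k. \<exists>l\<in>\<Lambda>. y (Suc k) = \<omega> l (y k))"

definition has_shadowing :: "'a set \<Rightarrow> ('a \<Rightarrow> 'a \<Rightarrow> ereal) \<Rightarrow> 'l set \<Rightarrow> ('l \<Rightarrow> 'a \<Rightarrow> 'a) \<Rightarrow> bool" where
  "has_shadowing M d \<Lambda> \<omega> \<longleftrightarrow>
     (\<forall>\<epsilon>>0. \<exists>\<delta>>0. \<forall>x. is_delta_chain M d \<Lambda> \<omega> \<delta> x \<longrightarrow>
        (\<exists>y. is_chain M \<Lambda> \<omega> y \<and> (\<forall>k. d (x k) (y k) < ereal \<epsilon>)))"

text \<open>Perturbing IFSs range over all compact parameter spaces;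
  every compact metric space is homeomorphic to a compact subset of the Hilbert cube
  inside nat \<Rightarrow> real (product metric), so we take parameter sets there.\<close>
definition topologically_stable ::
    "'a::topological_space set \<Rightarrow> ('a \<Rightarrow> 'a \<Rightarrow> ereal) \<Rightarrow> 'l set \<Rightarrow> ('l \<Rightarrow> 'a \<Rightarrow> 'a) \<Rightarrow> bool" where
  "topologically_stable M d \<Lambda> \<omega> \<longleftrightarrow>
     (\<forall>\<epsilon>>0. \<exists>\<delta>>0. \<forall>(\<Lambda>'::(nat \<Rightarrow> real) set) \<omega>'.
        is_IFS M \<Lambda>' \<omega>' \<and> dH M d \<Lambda> \<omega> \<Lambda>' \<omega>' \<le> ereal \<delta> \<longrightarrow>
        (\<forall>\<sigma> \<sigma>'. (\<forall>k. \<sigma> k \<in> \<Lambda> \<and> \<sigma>' k \<in> \<Lambda>') \<and>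
                 (\<forall>k. dC0 M d (\<omega> (\<sigma> k)) (\<omega>' (\<sigma>' k)) < ereal \<delta>) \<longrightarrow>
           (\<exists>h. continuous_on M h \<and> h ` M \<subseteq> M \<and>
                (\<forall>k. dC0 M d (omega_seq \<omega> \<sigma> k \<circ> h) (omega_seq \<omega>' \<sigma>' k) < ereal \<epsilon>) \<and>
                dC0 M d h id < ereal \<epsilon>)))"

end

theory Submission
  imports Defs
begin


definition partitions :: "(nat \<times> (nat \<Rightarrow> real)) set" where
  "partitions = {(n, t::nat \<Rightarrow> real). t 0 = 0 \<and> t n = 1 \<and> (\<forall>i<n. t i \<le> t (Suc i))}"

lemma curve_length_alt:
  "curve_length \<gamma> = (SUP p \<in> partitions. ereal (\<Sum>i<fst p. dist (\<gamma> (snd p (Suc i))) (\<gamma> (snd p i))))"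
  unfolding curve_length_def partitions_def by simp

lemma cl_upper:
  assumes "t 0 = 0" "t n = 1" "\<And>i. i<n \<Longrightarrow> t i \<le> t (Suc i)"
  shows "ereal (\<Sum>i<n. dist (\<gamma> (t (Suc i))) (\<gamma> (t i))) \<le> curve_length \<gamma>"
  unfolding curve_length_alt
  by (rule SUP_upper2[of "(n,t)"]) (use assms in \<open>auto simp: partitions_def\<close>)

lemma cl_least:
  assumes "\<And>n t. t 0 = 0 \<Longrightarrow> t n = 1 \<Longrightarrow> (\<forall>i<n. t i \<le> t (Suc i)) \<Longrightarrow>
            ereal (\<Sum>i<n. dist (\<gamma> (t (Suc i))) (\<gamma> (t i))) \<le> B"
  shows "curve_length \<gamma> \<le> B"
  unfolding curve_length_alt
  by (rule SUP_least) (use assms in \<open>auto simp: partitions_def\<close>)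

lemma cl_lipschitz:
  assumes "\<And>s t. dist (\<gamma> s) (\<gamma> t) \<le> C * \<bar>s - t\<bar>"
  shows "curve_length \<gamma> \<le> ereal C"
proof (rule cl_least)
  fix n and t :: "nat \<Rightarrow> real"
  assume h: "t 0 = 0" "t n = 1" "\<forall>i<n. t i \<le> t (Suc i)"
  have "(\<Sum>i<n. dist (\<gamma> (t (Suc i))) (\<gamma> (t i))) \<le> (\<Sum>i<n. C * (t (Suc i) - t i))"
    using h(3) assms by (intro sum_mono) (metis abs_of_nonneg diff_ge_0_iff_ge lessThan_iff)
  also have "\<dots> = C * (t n - t 0)"
    by (simp add: sum_distrib_left[symmetric] sum_lessThan_telescope)
  finally show "ereal (\<Sum>i<n. dist (\<gamma> (t (Suc i))) (\<gamma> (t i))) \<le> ereal C" using h by simp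
qed

lemma cl_ge_dist: "ereal (dist (\<gamma> 1) (\<gamma> 0)) \<le> curve_length \<gamma>"
  using cl_upper[of "\<lambda>i. if i = 0 then 0 else 1" 1 \<gamma>] by simp

lemma cl_reverse: "curve_length (reversepath \<gamma>) \<le> curve_length \<gamma>"
proof (rule cl_least)
  fix n and t :: "nat \<Rightarrow> real"
  assume h: "t 0 = 0" "t n = 1" "\<forall>i<n. t i \<le> t (Suc i)"
  define t' where "t' i = 1 - t (n - i)" for i
  have m: "\<forall>i<n. t' i \<le> t' (Suc i)"
  proof (intro allI impI)
    fix i assume "i < n"
    then have "t (n - Suc i) \<le> t (Suc (n - Suc i))" using h(3) by simp
    moreover have "Suc (n - Suc i) = n - i" using \<open>i<n\<close> by simp
    ultimately show "t' i \<le> t' (Suc i)" unfolding t'_def by simp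
  qed
  have "(\<Sum>i<n. dist (reversepath \<gamma> (t (Suc i))) (reversepath \<gamma> (t i)))
      = (\<Sum>i<n. dist (\<gamma> (1 - t (Suc i))) (\<gamma> (1 - t i)))"
    by (simp add: reversepath_def)
  also have "\<dots> = (\<Sum>i<n. dist (\<gamma> (1 - t (Suc (n - Suc i)))) (\<gamma> (1 - t (n - Suc i))))"
    by (rule sum.nat_diff_reindex[symmetric])
  also have "\<dots> = (\<Sum>i<n. dist (\<gamma> (t' (Suc i))) (\<gamma> (t' i)))"
    unfolding t'_def by (intro sum.cong refl) (auto simp: dist_commute Suc_diff_Suc)
  finally show "ereal (\<Sum>i<n. dist (reversepath \<gamma> (t (Suc i))) (reversepath \<gamma> (t i))) \<le> curve_length \<gamma>"
    using cl_upper[of t' n \<gamma>] m h by (simp add: t'_def)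
qed

lemma split_dist:
  fixes f :: "real \<Rightarrow> 'a::metric_space"
  assumes "a \<le> b"
  shows "dist (f b) (f a) \<le> dist (f (min b c)) (f (min a c)) + dist (f (max b c)) (f (max a c))"
proof (cases "b \<le> c")
  case True then show ?thesis using assms by (simp add: min_def max_def)
next
  case False
  show ?thesis
  proof (cases "c \<le> a")
    case True then show ?thesis using assms by (simp add: min_def max_def)
  next
    case False
    with \<open>\<not> b \<le> c\<close> show ?thesis using dist_triangle[of "f b" "f a" "f c"]
      by (simp add: min_def max_def dist_commute)
  qed
qed

lemma cl_join:
  assumes "pathfinish \<gamma>1 = pathstart \<gamma>2"
  shows "curve_length (\<gamma>1 +++ \<gamma>2) \<le> curve_length \<gamma>1 + curve_length \<gamma>2"
proof (rule cl_least)
  fix n and t :: "nat \<Rightarrow> real"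
  assume h: "t 0 = 0" "t n = 1" "\<forall>i<n. t i \<le> t (Suc i)"
  let ?T = "\<gamma>1 +++ \<gamma>2"
  define s where "s i = 2 * min (t i) (1/2)" for i
  define u where "u i = 2 * max (t i) (1/2) - 1" for i
  have Ts: "?T (min x (1/2)) = \<gamma>1 (2 * min x (1/2))" for x
    by (auto simp: joinpaths_def min_def)
  have Tu: "?T (max x (1/2)) = \<gamma>2 (2 * max x (1/2) - 1)" for x
    using assms by (auto simp: joinpaths_def pathfinish_def pathstart_def max_def)
  have "(\<Sum>i<n. dist (?T (t (Suc i))) (?T (t i))) \<le>
        (\<Sum>i<n. dist (?T (min (t (Suc i)) (1/2))) (?T (min (t i) (1/2))) +
                dist (?T (max (t (Suc i)) (1/2))) (?T (max (t i) (1/2))))"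
    using h(3) by (intro sum_mono split_dist) auto
  also have "\<dots> = (\<Sum>i<n. dist (\<gamma>1 (s (Suc i))) (\<gamma>1 (s i))) + (\<Sum>i<n. dist (\<gamma>2 (u (Suc i))) (\<gamma>2 (u i)))"
    unfolding sum.distrib Ts Tu s_def u_def ..
  finally have 1: "(\<Sum>i<n. dist (?T (t (Suc i))) (?T (t i))) \<le> \<dots>" .
  have a: "ereal (\<Sum>i<n. dist (\<gamma>1 (s (Suc i))) (\<gamma>1 (s i))) \<le> curve_length \<gamma>1"
    by (rule cl_upper) (use h in \<open>auto simp: s_def\<close>)
  have b: "ereal (\<Sum>i<n. dist (\<gamma>2 (u (Suc i))) (\<gamma>2 (u i))) \<le> curve_length \<gamma>2"
    by (rule cl_upper) (use h in \<open>auto simp: u_def\<close>)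
  have "ereal (\<Sum>i<n. dist (?T (t (Suc i))) (?T (t i))) \<le>
        ereal (\<Sum>i<n. dist (\<gamma>1 (s (Suc i))) (\<gamma>1 (s i))) + ereal (\<Sum>i<n. dist (\<gamma>2 (u (Suc i))) (\<gamma>2 (u i)))"
    using 1 by simp
  also have "\<dots> \<le> curve_length \<gamma>1 + curve_length \<gamma>2"
    by (rule add_mono[OF a b])
  finally show "ereal (\<Sum>i<n. dist (?T (t (Suc i))) (?T (t i))) \<le> curve_length \<gamma>1 + curve_length \<gamma>2" .
qed



definition good_path :: "'a::real_normed_vector set \<Rightarrow> 'a \<Rightarrow> 'a \<Rightarrow> real \<Rightarrow> bool" where
  "good_path M x y e \<longleftrightarrow> (\<exists>\<gamma>. path \<gamma> \<and> path_image \<gamma> \<subseteq> M \<and> pathstart \<gamma> = x \<and> pathfinish \<gamma> = y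
      \<and> curve_length \<gamma> < ereal e)"

lemma riem_le:
  "path \<gamma> \<Longrightarrow> path_image \<gamma> \<subseteq> M \<Longrightarrow> pathstart \<gamma> = x \<Longrightarrow> pathfinish \<gamma> = y \<Longrightarrow>
   riem_dist M x y \<le> curve_length \<gamma>"
  unfolding riem_dist_def by (rule INF_lower) auto

lemma riem_less_iff: "riem_dist M x y < ereal e \<longleftrightarrow> good_path M x y e"
  unfolding riem_dist_def good_path_def INF_less_iff by auto

lemma good_path_riem: "good_path M x y e \<Longrightarrow> riem_dist M x y < ereal e"
  using riem_less_iff by blast

lemma riem_ge_dist: "ereal (dist x y) \<le> riem_dist M x y"
  unfolding riem_dist_def
proof (rule INF_greatest)
  fix \<gamma> assume "\<gamma> \<in> {\<gamma>. path \<gamma> \<and> path_image \<gamma> \<subseteq> M \<and> pathstart \<gamma> = x \<and> pathfinish \<gamma> = y}"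
  then show "ereal (dist x y) \<le> curve_length \<gamma>"
    using cl_ge_dist[of \<gamma>] by (auto simp: pathstart_def pathfinish_def dist_commute)
qed

lemma good_path_rev: "good_path M x y e \<Longrightarrow> good_path M y x e"
  unfolding good_path_def
  by (metis cl_reverse order_le_less_trans path_image_reversepath path_reversepath
      pathfinish_reversepath pathstart_reversepath)

lemma good_path_join:
  assumes "good_path M x y e1" "good_path M y z e2"
  shows "good_path M x z (e1 + e2)"
proof -
  obtain g1 where g1: "path g1" "path_image g1 \<subseteq> M" "pathstart g1 = x" "pathfinish g1 = y"
     "curve_length g1 < ereal e1" using assms(1) unfolding good_path_def by blast
  obtain g2 where g2: "path g2" "path_image g2 \<subseteq> M" "pathstart g2 = y" "pathfinish g2 = z"
     "curve_length g2 < ereal e2" using assms(2) unfolding good_path_def by blast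
  have "curve_length (g1 +++ g2) \<le> curve_length g1 + curve_length g2"
    using g1 g2 by (intro cl_join) simp
  also have "\<dots> < ereal e1 + ereal e2"
    using g1(5) g2(5) by (rule ereal_add_strict_mono2)
  finally show ?thesis unfolding good_path_def using g1 g2
    by (intro exI[of _ "g1 +++ g2"]) (auto simp: path_image_join)
qed

lemma good_path_const: "x \<in> M \<Longrightarrow> e > 0 \<Longrightarrow> good_path M x x e"
  unfolding good_path_def
  apply (rule exI[of _ "\<lambda>_. x"])
  using cl_lipschitz[of "\<lambda>_. x" 0]
  by (auto simp: path_def pathstart_def pathfinish_def path_image_def intro: order_le_less_trans)

lemma good_path_mono: "good_path M x y e \<Longrightarrow> e \<le> e' \<Longrightarrow> good_path M x y e'"
proof -
  assume a: "good_path M x y e" "e \<le> e'"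
  then have "ereal e \<le> ereal e'" by simp
  with a(1) show ?thesis unfolding good_path_def using order_less_le_trans by blast
qed



lemma smooth_lipschitz:
  fixes \<psi> :: "'a::euclidean_space \<Rightarrow> 'b::euclidean_space"
  assumes sm: "smooth_on V \<psi>" and V: "open V" and sub: "cball c R \<subseteq> V"
  shows "\<exists>L>0. \<forall>x\<in>cball c R. \<forall>y\<in>cball c R. norm (\<psi> x - \<psi> y) \<le> L * norm (x - y)"
proof -
  have C1: "Ck_on (Suc 0) V \<psi>" using sm unfolding smooth_on_def by blast
  then have diff: "\<psi> differentiable_on V"
    and cont: "\<forall>b\<in>Basis. continuous_on V (\<lambda>x. frechet_derivative \<psi> (at x) b)" by auto
  have "\<forall>b\<in>Basis. \<exists>B. \<forall>x\<in>cball c R. norm (frechet_derivative \<psi> (at x) b) \<le> B"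
  proof
    fix b :: 'a assume "b \<in> Basis"
    then have "continuous_on (cball c R) (\<lambda>x. frechet_derivative \<psi> (at x) b)"
      using cont continuous_on_subset sub by blast
    then have "compact ((\<lambda>x. frechet_derivative \<psi> (at x) b) ` cball c R)"
      by (intro compact_continuous_image) auto
    then have "bounded ((\<lambda>x. frechet_derivative \<psi> (at x) b) ` cball c R)"
      by (rule compact_imp_bounded)
    then show "\<exists>B. \<forall>x\<in>cball c R. norm (frechet_derivative \<psi> (at x) b) \<le> B"
      unfolding bounded_iff by auto
  qed
  then obtain B where B: "\<forall>b\<in>Basis. \<forall>x\<in>cball c R. norm (frechet_derivative \<psi> (at x) b) \<le> B b"
    by metis
  define L where "L = 1 + (\<Sum>b\<in>Basis. \<bar>B b\<bar>)"
  have Lpos: "L > 0" unfolding L_def by (smt (verit) sum_nonneg abs_ge_zero)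
  have der: "(\<psi> has_derivative frechet_derivative \<psi> (at x)) (at x within cball c R)"
    if "x \<in> cball c R" for x
  proof -
    have "x \<in> V" using that sub by auto
    then have "\<psi> differentiable (at x)"
      using diff V differentiable_on_eq_differentiable_at by blast
    then show ?thesis
      using frechet_derivative_works has_derivative_at_withinI by blast
  qed
  have on: "onorm (frechet_derivative \<psi> (at x)) \<le> L" if "x \<in> cball c R" for x
  proof -
    have bl: "bounded_linear (frechet_derivative \<psi> (at x))"
      using der[OF that] has_derivative_bounded_linear by blast
    have "onorm (frechet_derivative \<psi> (at x)) \<le> (\<Sum>b\<in>Basis. norm (frechet_derivative \<psi> (at x) b))"
      by (rule onorm_componentwise[OF bl])
    also have "\<dots> \<le> (\<Sum>b\<in>Basis. \<bar>B b\<bar>)"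
      using B that by (intro sum_mono) fastforce
    also have "\<dots> \<le> L" unfolding L_def by simp
    finally show ?thesis .
  qed
  show ?thesis
    using Lpos differentiable_bound[OF convex_cball der on] by blast
qed



definition pushable :: "'a::real_normed_vector set \<Rightarrow> real \<Rightarrow> 'a \<Rightarrow> 'a \<Rightarrow> bool" where
  "pushable M \<eta> p q \<longleftrightarrow> (\<exists>\<Phi>. continuous_on M \<Phi> \<and> \<Phi> ` M \<subseteq> M \<and> \<Phi> p = q \<and>
      (\<forall>w\<in>M. good_path M w (\<Phi> w) \<eta>))"

lemma clamp_lip: "\<bar>max 0 (min 1 s) - max 0 (min 1 t)\<bar> \<le> \<bar>s - t::real\<bar>"
  by (simp add: max_def min_def abs_if)

lemma push_local:
  fixes M :: "'a::euclidean_space set"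
  assumes sm: "smooth_submanifold k M" and cM: "closed M" and p0: "p0 \<in> M" and eta: "\<eta> > 0"
  shows "\<exists>s>0. \<forall>p\<in>M. \<forall>q\<in>M. dist p0 p < s \<longrightarrow> dist p q < s \<longrightarrow> pushable M \<eta> p q"
proof -
  obtain U V \<phi> \<psi> S where U: "open U" "p0 \<in> U" and V: "open V" and sphi: "smooth_on U (\<phi>::'a\<Rightarrow>'a)"
    and spsi: "smooth_on V \<psi>" and phiU: "\<phi> ` U = V" and psiphi: "\<forall>x\<in>U. \<psi> (\<phi> x) = x"
    and phipsi: "\<forall>y\<in>V. \<phi> (\<psi> y) = y" and S: "subspace S" and chart: "\<phi> ` (U \<inter> M) = V \<inter> S"
  proof -
    from sm p0 obtain U V \<phi> \<psi> S where H: "open U \<and> p0 \<in> U \<and> open V \<and> smooth_on U (\<phi>::'a\<Rightarrow>'a) \<and> smooth_on V \<psi> \<and>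
        \<phi> ` U = V \<and> (\<forall>x\<in>U. \<psi> (\<phi> x) = x) \<and> (\<forall>y\<in>V. \<phi> (\<psi> y) = y) \<and>
        subspace S \<and> dim S = k \<and> \<phi> ` (U \<inter> M) = V \<inter> S"
      using bspec[OF sm[unfolded smooth_submanifold_def] p0] by (elim exE) iprover
    show thesis using H by (elim conjE) (rule that)
  qed
  have cphi: "continuous_on U \<phi>" using sphi unfolding smooth_on_def by (metis Ck_on.simps(1))
  have cpsi: "continuous_on V \<psi>" using spsi unfolding smooth_on_def by (metis Ck_on.simps(1))
  define c0 where "c0 = \<phi> p0"
  have c0V: "c0 \<in> V" using phiU U c0_def by blast
  obtain R0 where R0: "R0 > 0" "cball c0 R0 \<subseteq> V" using V c0V open_contains_cball by blast
  obtain L where L: "L > 0" "\<forall>x\<in>cball c0 R0. \<forall>y\<in>cball c0 R0. norm (\<psi> x - \<psi> y) \<le> L * norm (x - y)"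
    using smooth_lipschitz[OF spsi V R0(2)] by blast
  define r0 where "r0 = R0 / 3"
  define \<tau> where "\<tau> = min (r0/2) (\<eta> / (4*L))"
  have r0: "r0 > 0" using R0 r0_def by simp
  have tau: "\<tau> > 0" using r0 eta L by (simp add: \<tau>_def)
  have taur: "\<tau> \<le> r0/2" by (simp add: \<tau>_def)
  have taue: "\<tau> \<le> \<eta> / (4*L)" by (simp add: \<tau>_def)
  have r0R: "R0 = 3 * r0" by (simp add: r0_def)
  have "isCont \<phi> p0" using cphi U continuous_on_eq_continuous_at by blast
  then obtain s1 where s1: "s1 > 0" "\<forall>x. dist x p0 < s1 \<longrightarrow> dist (\<phi> x) c0 < \<tau>"
    unfolding continuous_at_eps_delta c0_def using tau by blast
  obtain s2 where s2: "s2 > 0" "ball p0 s2 \<subseteq> U" using U open_contains_ball by blast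
  define s where "s = min s1 s2 / 2"
  have spos: "s > 0" using s1 s2 s_def by simp
  have psiM: "\<psi> y \<in> M \<and> \<psi> y \<in> U \<and> \<phi> (\<psi> y) = y" if "y \<in> V \<inter> S" for y
  proof -
    from that chart obtain u where "u \<in> U \<inter> M" "y = \<phi> u" by blast
    then show ?thesis using psiphi by auto
  qed
  have phiS: "\<phi> z \<in> S" if "z \<in> U" "z \<in> M" for z
    using that chart by blast
  show ?thesis
  proof (intro exI[of _ s] conjI spos ballI impI)
    fix p q assume pM: "p \<in> M" and qM: "q \<in> M" and dp: "dist p0 p < s" and dq: "dist p q < s"
    have dq0: "dist p0 q < 2 * s" using dist_triangle[of p0 q p] dp dq by simp
    have pU: "p \<in> U" using s2 dp s_def by (auto simp: dist_commute)
    have qU: "q \<in> U" using s2 dq0 s_def by (auto simp: dist_commute)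
    define a where "a = \<phi> p"
    define b where "b = \<phi> q"
    have da: "dist a c0 < \<tau>" using s1 dp s_def a_def by (auto simp: dist_commute)
    have db: "dist b c0 < \<tau>" using s1 dq0 s_def b_def by (auto simp: dist_commute)
    define v where "v = b - a"
    have nv: "norm v < 2 * \<tau>"
      using dist_triangle[of a b c0] da db by (simp add: v_def dist_norm dist_commute norm_minus_commute)
    have aS: "a \<in> S" using phiS pU pM a_def by blast
    have bS: "b \<in> S" using phiS qU qM b_def by blast
    have vS: "v \<in> S" using aS bS S by (simp add: v_def subspace_diff)
    define \<beta> where "\<beta> y = max 0 (1 - dist y a / r0)" for y
    have beta01: "0 \<le> \<beta> y" "\<beta> y \<le> 1" for y
      using r0 by (auto simp: \<beta>_def)
    define \<Phi> where "\<Phi> z = (if z \<in> U \<and> dist (\<phi> z) a \<le> r0 then \<psi> (\<phi> z + \<beta> (\<phi> z) *\<^sub>R v) else z)" for z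
    have inball: "y + c *\<^sub>R v \<in> cball c0 R0" if "dist y a \<le> r0" "0 \<le> c" "c \<le> 1" for y c
    proof -
      have "norm (c *\<^sub>R v) \<le> norm v" using that by (simp add: mult_left_le_one_le)
      then have "dist c0 (y + c *\<^sub>R v) \<le> dist c0 a + dist a y + norm v"
        using dist_triangle[of c0 y a] norm_triangle_ineq[of "y - c0" "c *\<^sub>R v"]
        by (simp add: dist_norm dist_commute algebra_simps norm_minus_commute)
      also have "\<dots> < \<tau> + r0 + 2 * \<tau>" using da that nv by (simp add: dist_commute)
      also have "\<dots> \<le> R0" using taur r0R r0 by linarith
      finally show ?thesis by simp
    qed
    have inVS: "y + c *\<^sub>R v \<in> V \<inter> S" if "y \<in> S" "dist y a \<le> r0" "0 \<le> c" "c \<le> 1" for y c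
      using inball[OF that(2-4)] R0 S that(1) vS by (auto intro: subspace_add subspace_scale)
    have good: "good_path M w (\<Phi> w) \<eta>" if wM: "w \<in> M" for w
    proof (cases "w \<in> U \<and> dist (\<phi> w) a \<le> r0")
      case False
      show ?thesis using good_path_const[OF wM eta] False by (auto simp add: \<Phi>_def)
    next
      case True
      have wS: "\<phi> w \<in> S" using phiS True wM by blast
      define cl where "cl t = max 0 (min 1 t) * \<beta> (\<phi> w)" for t :: real
      have cl01: "0 \<le> cl t" "cl t \<le> 1" for t
        using beta01[of "\<phi> w"] by (auto simp: cl_def mult_le_one)
      define \<gamma> where "\<gamma> t = \<psi> (\<phi> w + cl t *\<^sub>R v)" for t
      have pt: "\<phi> w + cl t *\<^sub>R v \<in> V \<inter> S" for t using inVS[OF wS] True cl01 by blast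
      have ccl: "continuous_on UNIV cl" unfolding cl_def by (intro continuous_intros)
      have pathg: "path \<gamma>" unfolding path_def \<gamma>_def
        by (rule continuous_on_compose2[OF cpsi]) (use pt in \<open>auto intro!: continuous_intros continuous_on_subset[OF ccl]\<close>)
      have imgg: "path_image \<gamma> \<subseteq> M" unfolding path_image_def \<gamma>_def using psiM pt by blast
      have st: "pathstart \<gamma> = w" using psiphi True by (simp add: pathstart_def \<gamma>_def cl_def)
      have fi: "pathfinish \<gamma> = \<Phi> w" using True by (simp add: pathfinish_def \<gamma>_def cl_def \<Phi>_def)
      have lip: "dist (\<gamma> s) (\<gamma> t) \<le> (L * norm v) * \<bar>s - t\<bar>" for s t
      proof -
        have "dist (\<gamma> s) (\<gamma> t) \<le> L * norm ((\<phi> w + cl s *\<^sub>R v) - (\<phi> w + cl t *\<^sub>R v))"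
        proof -
          have "\<phi> w + cl s *\<^sub>R v \<in> cball c0 R0" "\<phi> w + cl t *\<^sub>R v \<in> cball c0 R0"
            using inball True cl01 by auto
          then show ?thesis using L(2) unfolding \<gamma>_def dist_norm by blast
        qed
        also have "\<dots> = L * (\<bar>cl s - cl t\<bar> * norm v)"
          by (simp add: scaleR_diff_left[symmetric])
        also have "\<bar>cl s - cl t\<bar> \<le> \<bar>s - t\<bar>"
        proof -
          have "\<bar>cl s - cl t\<bar> = \<bar>max 0 (min 1 s) - max 0 (min 1 t)\<bar> * \<beta> (\<phi> w)"
            unfolding cl_def using beta01[of "\<phi> w"] by (simp add: left_diff_distrib[symmetric] abs_mult)
          also have "\<dots> \<le> \<bar>max 0 (min 1 s) - max 0 (min 1 t)\<bar>"
            using beta01[of "\<phi> w"] by (simp add: mult_left_le)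
          also have "\<dots> \<le> \<bar>s - t\<bar>" by (rule clamp_lip)
          finally show ?thesis .
        qed
        then have "L * (\<bar>cl s - cl t\<bar> * norm v) \<le> L * (\<bar>s - t\<bar> * norm v)"
          using L(1) by (simp add: mult_right_mono)
        finally show ?thesis by (simp add: algebra_simps)
      qed
      have "curve_length \<gamma> \<le> ereal (L * norm v)" by (rule cl_lipschitz[OF lip])
      also have "L * norm v < \<eta>"
      proof -
        have "L * norm v \<le> L * (2 * \<tau>)" using nv L(1) by simp
        also have "\<dots> \<le> L * (2 * (\<eta> / (4 * L)))" using L(1) taue by (simp add: field_simps)
        also have "\<dots> < \<eta>" using L(1) eta by (simp add: field_simps)
        finally show ?thesis .
      qed
      then have "ereal (L * norm v) < ereal \<eta>" by simp
      finally show ?thesis unfolding good_path_def using pathg imgg st fi by blast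
    qed
    have PhiM: "\<Phi> ` M \<subseteq> M"
    proof
      fix y assume "y \<in> \<Phi> ` M"
      then obtain z where z: "z \<in> M" "y = \<Phi> z" by blast
      show "y \<in> M"
      proof (cases "z \<in> U \<and> dist (\<phi> z) a \<le> r0")
        case True
        then show ?thesis using z psiM inVS[of "\<phi> z" "\<beta> (\<phi> z)"] phiS beta01 by (simp add: \<Phi>_def)
      next
        case False then show ?thesis using z by (auto simp add: \<Phi>_def)
      qed
    qed
    have Phip: "\<Phi> p = q"
      using pU psiphi qU r0 by (simp add: \<Phi>_def \<beta>_def a_def v_def b_def)
    define K where "K = \<psi> ` (cball a r0 \<inter> S)"
    have cbV: "cball a r0 \<subseteq> V"
    proof
      fix y assume "y \<in> cball a r0"
      then have "dist c0 y \<le> dist c0 a + dist a y" "dist a y \<le> r0" using dist_triangle by auto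
      then have "dist c0 y < R0" using da taur r0R r0 by (simp add: dist_commute)
      then show "y \<in> V" using R0 by auto
    qed
    have Keq: "K = {z\<in>M. z \<in> U \<and> dist (\<phi> z) a \<le> r0}"
    proof
      show "K \<subseteq> {z\<in>M. z \<in> U \<and> dist (\<phi> z) a \<le> r0}"
        using psiM cbV by (fastforce simp: K_def dist_commute)
    next
      show "{z\<in>M. z \<in> U \<and> dist (\<phi> z) a \<le> r0} \<subseteq> K"
      proof
        fix z assume z: "z \<in> {z\<in>M. z \<in> U \<and> dist (\<phi> z) a \<le> r0}"
        then have "\<phi> z \<in> cball a r0 \<inter> S" using phiS by (auto simp: dist_commute)
        moreover have "z = \<psi> (\<phi> z)" using psiphi z by auto
        ultimately show "z \<in> K" unfolding K_def by blast
      qed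
    qed
    have cK: "compact K" unfolding K_def
      using cpsi cbV by (intro compact_continuous_image compact_Int_closed closed_subspace S)
        (auto intro: continuous_on_subset)
    have contK: "continuous_on K \<Phi>"
    proof -
      have KU: "K \<subseteq> U" using Keq by auto
      have "continuous_on K (\<lambda>z. \<psi> (\<phi> z + \<beta> (\<phi> z) *\<^sub>R v))"
      proof (rule continuous_on_compose2[OF cpsi])
        show "continuous_on K (\<lambda>z. \<phi> z + \<beta> (\<phi> z) *\<^sub>R v)"
          unfolding \<beta>_def using continuous_on_subset[OF cphi KU]
          by (intro continuous_intros) (use r0 in auto)
        show "(\<lambda>z. \<phi> z + \<beta> (\<phi> z) *\<^sub>R v) ` K \<subseteq> V"
          using Keq inball beta01 R0 by blast
      qed
      then show ?thesis
        by (rule continuous_on_eq) (use Keq in \<open>auto simp: \<Phi>_def\<close>)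
    qed
    define W where "W = U \<inter> \<phi> -` ball a r0"
    have oW: "open W" unfolding W_def by (rule continuous_open_preimage[OF cphi U(1) open_ball])
    have contMW: "continuous_on (M - W) \<Phi>"
    proof (rule continuous_on_eq[OF continuous_on_id])
      fix z assume z: "z \<in> M - W"
      show "z = \<Phi> z"
      proof (cases "z \<in> U \<and> dist (\<phi> z) a \<le> r0")
        case True
        with z have "dist (\<phi> z) a = r0" by (auto simp: W_def dist_commute)
        then have "\<beta> (\<phi> z) = 0" using r0 by (simp add: \<beta>_def)
        then show ?thesis using True psiphi by (simp add: \<Phi>_def)
      next
        case False then show ?thesis by (auto simp add: \<Phi>_def)
      qed
    qed
    have Msplit: "M = K \<union> (M - W)"
      using Keq by (auto simp: W_def dist_commute)
    have contM: "continuous_on M \<Phi>"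
      using continuous_on_closed_Un[OF compact_imp_closed[OF cK] closed_Diff[OF cM oW] contK contMW]
      Msplit by simp
    show "pushable M \<eta> p q" unfolding pushable_def
      using contM PhiM Phip good by blast
  qed
qed



lemma push_global:
  fixes M :: "'a::euclidean_space set"
  assumes sm: "smooth_submanifold k M" and cpt: "compact M" and eta: "\<eta> > 0"
  shows "\<exists>\<rho>>0. \<forall>p\<in>M. \<forall>q\<in>M. dist p q < \<rho> \<longrightarrow> pushable M \<eta> p q"
proof (cases "M = {}")
  case True then show ?thesis by (intro exI[of _ 1]) auto
next
  case False
  have cM: "closed M" using cpt compact_imp_closed by blast
  have "\<forall>p0\<in>M. \<exists>s>0. \<forall>p\<in>M. \<forall>q\<in>M. dist p0 p < s \<longrightarrow> dist p q < s \<longrightarrow> pushable M \<eta> p q"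
    using push_local[OF sm cM _ eta] by blast
  then obtain sf where sf: "\<And>p0. p0 \<in> M \<Longrightarrow> sf p0 > 0 \<and>
      (\<forall>p\<in>M. \<forall>q\<in>M. dist p0 p < sf p0 \<longrightarrow> dist p q < sf p0 \<longrightarrow> pushable M \<eta> p q)"
    by metis
  have cov: "M \<subseteq> (\<Union>c\<in>M. ball c (sf c))" using sf by force
  obtain C where C: "C \<subseteq> M" "finite C" "M \<subseteq> (\<Union>c\<in>C. ball c (sf c))"
    using compactE_image[OF cpt _ cov] by blast
  have Cne: "C \<noteq> {}" using C(3) False by blast
  define \<rho> where "\<rho> = Min (sf ` C)"
  have rpos: "\<rho> > 0" unfolding \<rho>_def using C sf Cne by auto
  show ?thesis
  proof (intro exI[of _ \<rho>] conjI rpos ballI impI)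
    fix p q assume p: "p \<in> M" and q: "q \<in> M" and d: "dist p q < \<rho>"
    obtain c where c: "c \<in> C" "p \<in> ball c (sf c)" using C(3) p by blast
    have "\<rho> \<le> sf c" unfolding \<rho>_def using C(2) c(1) by simp
    then show "pushable M \<eta> p q" using sf[of c] c C(1) p q d by auto
  qed
qed

lemma pushable_good: "pushable M \<eta> p q \<Longrightarrow> p \<in> M \<Longrightarrow> good_path M p q \<eta>"
  unfolding pushable_def by metis

lemma dC0_le:
  assumes "\<And>z. z \<in> M \<Longrightarrow> good_path M (f z) (g z) \<eta>"
  shows "dC0 M (riem_dist M) f g \<le> ereal \<eta>"
  unfolding dC0_def
  by (rule SUP_least) (use assms good_path_riem in \<open>fastforce intro: less_imp_le\<close>)

lemma dC0_ge: "z \<in> M \<Longrightarrow> riem_dist M (f z) (g z) \<le> dC0 M (riem_dist M) f g"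
  unfolding dC0_def by (rule SUP_upper)

lemma omega_seq_props:
  assumes "\<And>l. l \<in> \<Lambda> \<Longrightarrow> continuous_on M (\<omega> l) \<and> \<omega> l ` M \<subseteq> M" and "\<And>k. \<sigma> k \<in> \<Lambda>"
  shows "continuous_on M (omega_seq \<omega> \<sigma> k) \<and> omega_seq \<omega> \<sigma> k ` M \<subseteq> M"
proof (induction k)
  case 0 then show ?case by (simp add: continuous_on_id)
next
  case (Suc k)
  have "continuous_on M (\<omega> (\<sigma> k) \<circ> omega_seq \<omega> \<sigma> k)"
    using Suc assms continuous_on_compose continuous_on_subset by metis
  moreover have "(\<omega> (\<sigma> k) \<circ> omega_seq \<omega> \<sigma> k) ` M \<subseteq> M" using Suc assms by (fastforce simp: image_subset_iff)
  ultimately show ?case by simp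
qed

lemma finite_param_cont:
  fixes P :: "'b::t1_space set"
  assumes "finite P" "closed M" "\<And>l. l \<in> P \<Longrightarrow> continuous_on M (g l)"
  shows "continuous_on (P \<times> M) (\<lambda>(l, x). g l x)"
proof -
  have eq: "P \<times> M = (\<Union>l\<in>P. {l} \<times> M)" by auto
  show ?thesis unfolding eq
  proof (rule continuous_on_closed_Union[OF assms(1)])
    fix l assume l: "l \<in> P"
    show "closed ({l} \<times> M)" using assms(2) by (intro closed_Times) auto
    have "continuous_on ({l} \<times> M) (\<lambda>x. g l (snd x))"
      by (rule continuous_on_compose2[OF assms(3)[OF l]]) (auto intro: continuous_intros)
    then show "continuous_on ({l} \<times> M) (\<lambda>(l, x). g l x)"
      by (rule continuous_on_eq) auto
  qed
qed



theorem mainTheorem8: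
  fixes M :: "'a::euclidean_space set"
    and \<Lambda> :: "'l::metric_space set"
    and \<omega> :: "'l \<Rightarrow> 'a \<Rightarrow> 'a"
    and k :: nat
  assumes "smooth_submanifold k M"
    and "compact M"
    and "is_IFS M \<Lambda> \<omega>"
    and "topologically_stable M (riem_dist M) \<Lambda> \<omega>"
  shows "has_shadowing M (riem_dist M) \<Lambda> \<omega>"
proof -
  note sm = assms(1) and cpt = assms(2)
  have cM: "closed M" using cpt compact_imp_closed by blast
  have cptL: "compact \<Lambda>" and contw: "continuous_on (\<Lambda> \<times> M) (\<lambda>(l, x). \<omega> l x)"
    and wM: "\<And>l x. l \<in> \<Lambda> \<Longrightarrow> x \<in> M \<Longrightarrow> \<omega> l x \<in> M"
    using assms(3) unfolding is_IFS_def by auto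
  have contl: "continuous_on M (\<omega> l)" if l: "l \<in> \<Lambda>" for l
  proof -
    have "continuous_on M (\<lambda>x. (\<lambda>(l, x). \<omega> l x) (l, x))"
      by (rule continuous_on_compose2[OF contw]) (use l in \<open>auto intro: continuous_intros\<close>)
    then show ?thesis by simp
  qed
  have wprops: "continuous_on M (\<omega> l) \<and> \<omega> l ` M \<subseteq> M" if "l \<in> \<Lambda>" for l
    using contl wM that by blast
  show ?thesis unfolding has_shadowing_def
  proof (intro allI impI)
    fix \<epsilon> :: real assume epos: "\<epsilon> > 0"
    from assms(4)[unfolded topologically_stable_def, rule_format, of "\<epsilon>/2"] epos
    obtain \<delta>1 where d1: "\<delta>1 > 0" and ST: "\<forall>(\<Lambda>'::(nat \<Rightarrow> real) set) \<omega>'.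
        is_IFS M \<Lambda>' \<omega>' \<and> dH M (riem_dist M) \<Lambda> \<omega> \<Lambda>' \<omega>' \<le> ereal \<delta>1 \<longrightarrow>
        (\<forall>\<sigma> \<sigma>'. (\<forall>k. \<sigma> k \<in> \<Lambda> \<and> \<sigma>' k \<in> \<Lambda>') \<and>
                 (\<forall>k. dC0 M (riem_dist M) (\<omega> (\<sigma> k)) (\<omega>' (\<sigma>' k)) < ereal \<delta>1) \<longrightarrow>
           (\<exists>h. continuous_on M h \<and> h ` M \<subseteq> M \<and>
                (\<forall>k. dC0 M (riem_dist M) (omega_seq \<omega> \<sigma> k \<circ> h) (omega_seq \<omega>' \<sigma>' k) < ereal (\<epsilon>/2)) \<and>
                dC0 M (riem_dist M) h id < ereal (\<epsilon>/2)))"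
      by auto
    define \<eta> where "\<eta> = min (\<delta>1/2) (\<epsilon>/2)"
    have eta: "\<eta> > 0" "\<eta> < \<delta>1" "\<eta> \<le> \<epsilon>/2" using d1 epos by (auto simp: \<eta>_def)
    obtain \<rho> where rho: "\<rho> > 0" and PU: "\<And>p q. p \<in> M \<Longrightarrow> q \<in> M \<Longrightarrow> dist p q < \<rho> \<Longrightarrow> pushable M \<eta> p q"
      using push_global[OF sm cpt eta(1)] by blast
    have closeg: "good_path M p q \<eta>" if "p \<in> M" "q \<in> M" "dist p q < \<rho>" for p q
      using PU[OF that] pushable_good that(1) by blast
    show "\<exists>\<delta>>0. \<forall>x. is_delta_chain M (riem_dist M) \<Lambda> \<omega> \<delta> x \<longrightarrow>
             (\<exists>y. is_chain M \<Lambda> \<omega> y \<and> (\<forall>k. riem_dist M (x k) (y k) < ereal \<epsilon>))"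
    proof (intro exI[of _ "\<rho>/4"] conjI allI impI)
      show "\<rho>/4 > 0" using rho by simp
      fix x assume dc: "is_delta_chain M (riem_dist M) \<Lambda> \<omega> (\<rho>/4) x"
      have xM: "\<And>k. x k \<in> M" using dc unfolding is_delta_chain_def by blast
      obtain lam where lam: "\<And>k. lam k \<in> \<Lambda>"
        and lamd: "\<And>k. riem_dist M (x (Suc k)) (\<omega> (lam k) (x k)) \<le> ereal (\<rho>/4)"
        using dc unfolding is_delta_chain_def by metis
      have lamdist: "dist (x (Suc k)) (\<omega> (lam k) (x k)) \<le> \<rho>/4" for k
        using order_trans[OF riem_ge_dist lamd] by simp
      have uc: "uniformly_continuous_on (\<Lambda> \<times> M) (\<lambda>(l, x). \<omega> l x)"
        by (rule compact_uniformly_continuous[OF contw compact_Times[OF cptL cpt]])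
      obtain \<alpha> where alpha: "\<alpha> > 0" and ucd: "\<And>u u'. u \<in> \<Lambda> \<times> M \<Longrightarrow> u' \<in> \<Lambda> \<times> M \<Longrightarrow> dist u' u < \<alpha> \<Longrightarrow>
          dist ((\<lambda>(l, x). \<omega> l x) u') ((\<lambda>(l, x). \<omega> l x) u) < \<rho>/2"
        using uc[unfolded uniformly_continuous_on_def, rule_format, of "\<rho>/2"] rho by auto
      have near: "dist (\<omega> l z) (\<omega> c z) < \<rho>/2" if "l \<in> \<Lambda>" "c \<in> \<Lambda>" "z \<in> M" "dist c l < \<alpha>" for l c z
      proof -
        have "dist (c, z) (l, z) = dist c l" by (simp add: dist_Pair_Pair)
        then have "dist ((\<lambda>(l, x). \<omega> l x) (c, z)) ((\<lambda>(l, x). \<omega> l x) (l, z)) < \<rho>/2"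
          using ucd[of "(l, z)" "(c, z)"] that by auto
        then show ?thesis by (simp add: dist_commute)
      qed
      have cov: "\<Lambda> \<subseteq> (\<Union>c\<in>\<Lambda>. ball c \<alpha>)" using alpha by force
      obtain K where K: "K \<subseteq> \<Lambda>" "finite K" "\<Lambda> \<subseteq> (\<Union>c\<in>K. ball c \<alpha>)"
        using compactE_image[OF cptL _ cov] by blast
      have "\<forall>l\<in>\<Lambda>. \<exists>c. c \<in> K \<and> (\<forall>z\<in>M. dist (\<omega> l z) (\<omega> c z) < \<rho>/2)"
      proof
        fix l assume l: "l \<in> \<Lambda>"
        then obtain c where c: "c \<in> K" "dist c l < \<alpha>" using K(3) by (auto simp: dist_commute)
        then show "\<exists>c. c \<in> K \<and> (\<forall>z\<in>M. dist (\<omega> l z) (\<omega> c z) < \<rho>/2)"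
          using near[OF l] K(1) by blast
      qed
      then obtain mu where mu: "\<And>l. l \<in> \<Lambda> \<Longrightarrow> mu l \<in> K"
        and mud: "\<And>l z. l \<in> \<Lambda> \<Longrightarrow> z \<in> M \<Longrightarrow> dist (\<omega> l z) (\<omega> (mu l) z) < \<rho>/2"
        by metis
      obtain ks where ks: "set ks = K" using finite_list[OF K(2)] by blast
      define idx where "idx c = (SOME i. i < length ks \<and> ks ! i = c)" for c
      have idx: "idx c < length ks \<and> ks ! idx c = c" if "c \<in> K" for c
      proof -
        have "\<exists>i. i < length ks \<and> ks ! i = c" using that ks by (metis in_set_conv_nth)
        then show ?thesis unfolding idx_def by (rule someI_ex)
      qed
      have ksL: "ks ! i \<in> \<Lambda>" if "i < length ks" for i
        using that ks K(1) nth_mem by blast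
      define \<mu> where "\<mu> k = mu (lam k)" for k
      have muL: "\<mu> k \<in> \<Lambda>" "\<mu> k \<in> K" for k using mu lam K(1) by (auto simp: \<mu>_def)
      have pk: "pushable M \<eta> (\<omega> (\<mu> k) (x k)) (x (Suc k))" for k
      proof (rule PU)
        show "\<omega> (\<mu> k) (x k) \<in> M" using wM muL xM by blast
        show "x (Suc k) \<in> M" using xM by blast
        have "dist (\<omega> (lam k) (x k)) (\<omega> (\<mu> k) (x k)) < \<rho>/2" using mud lam xM by (simp add: \<mu>_def)
        then show "dist (\<omega> (\<mu> k) (x k)) (x (Suc k)) < \<rho>"
          using lamdist[of k] dist_triangle[of "\<omega> (\<mu> k) (x k)" "x (Suc k)" "\<omega> (lam k) (x k)"] rho
          by (simp add: dist_commute)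
      qed
      obtain \<Phi> where Phi: "\<And>k. continuous_on M (\<Phi> k)" "\<And>k. \<Phi> k ` M \<subseteq> M"
        "\<And>k. \<Phi> k (\<omega> (\<mu> k) (x k)) = x (Suc k)" "\<And>k w. w \<in> M \<Longrightarrow> good_path M w (\<Phi> k w) \<eta>"
        using pk unfolding pushable_def by metis
      define G where "G k = \<Phi> k \<circ> \<omega> (\<mu> k)" for k
      define e where "e j = (\<lambda>_::nat. real j)" for j
      define f where "f i = (\<lambda>_::nat. - 1 - real i)" for i
      define \<omega>' where "\<omega>' l z = (if 0 \<le> l 0 then G (nat \<lfloor>l 0\<rfloor>) z else \<omega> (ks ! nat (\<lfloor>- l 0\<rfloor> - 1)) z)"
        for l :: "nat \<Rightarrow> real" and z
      have we: "\<omega>' (e j) = G j" for j by (simp add: \<omega>'_def e_def fun_eq_iff)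
      have wf: "\<omega>' (f i) = \<omega> (ks ! i)" for i
      proof -
        have "\<lfloor>1 + real i\<rfloor> = 1 + int i" by linarith
        then show ?thesis by (simp add: \<omega>'_def f_def fun_eq_iff)
      qed
      have Gprops: "continuous_on M (G j) \<and> G j ` M \<subseteq> M" for j
      proof -
        have "continuous_on M (\<Phi> j \<circ> \<omega> (\<mu> j))"
          by (rule continuous_on_compose[OF contl[OF muL(1)]]) (use Phi(1) continuous_on_subset wM muL in \<open>meson image_subsetI\<close>)
        then show ?thesis using Phi(2) wM muL unfolding G_def by (fastforce simp: image_subset_iff)
      qed
      have Ggood: "good_path M (\<omega> (\<mu> j) z) (G j z) \<eta>" if "z \<in> M" for j z
        unfolding G_def using Phi(4) wM muL that by simp
      have key: "\<exists>z\<in>M. \<forall>k\<le>n. riem_dist M (omega_seq \<omega> \<mu> k z) (x k) < ereal (\<epsilon>/2)" for n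
      proof -
        define \<Lambda>n where "\<Lambda>n = e ` {..<n} \<union> f ` {..<length ks}"
        define \<sigma>' where "\<sigma>' k = (if k < n then e k else f (idx (\<mu> k)))" for k
        have fin: "finite \<Lambda>n" unfolding \<Lambda>n_def by simp
        have memb: "l \<in> \<Lambda>n \<Longrightarrow> (\<exists>j<n. l = e j) \<or> (\<exists>i<length ks. l = f i)" for l
          unfolding \<Lambda>n_def by auto
        have w'props: "continuous_on M (\<omega>' l) \<and> \<omega>' l ` M \<subseteq> M" if "l \<in> \<Lambda>n" for l
          using memb[OF that] Gprops wprops ksL we wf by (auto simp: image_subset_iff)
        have IFS: "is_IFS M \<Lambda>n \<omega>'"
          unfolding is_IFS_def using fin w'props
          by (auto intro!: finite_imp_compact finite_param_cont[OF fin cM])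
        have dH: "dH M (riem_dist M) \<Lambda> \<omega> \<Lambda>n \<omega>' \<le> ereal \<delta>1"
        proof -
          have A: "(SUP l\<in>\<Lambda>. INF l'\<in>\<Lambda>n. dC0 M (riem_dist M) (\<omega> l) (\<omega>' l')) \<le> ereal \<eta>"
          proof (rule SUP_least)
            fix l assume l: "l \<in> \<Lambda>"
            have i: "idx (mu l) < length ks" "ks ! idx (mu l) = mu l" using idx mu l by auto
            have "f (idx (mu l)) \<in> \<Lambda>n" using i unfolding \<Lambda>n_def by auto
            then have "(INF l'\<in>\<Lambda>n. dC0 M (riem_dist M) (\<omega> l) (\<omega>' l')) \<le> dC0 M (riem_dist M) (\<omega> l) (\<omega>' (f (idx (mu l))))"
              by (rule INF_lower)
            also have "\<dots> \<le> ereal \<eta>" unfolding wf i(2)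
            proof (rule dC0_le)
              fix z assume z: "z \<in> M"
              show "good_path M (\<omega> l z) (\<omega> (mu l) z) \<eta>"
              proof (rule closeg)
                show "\<omega> l z \<in> M" using wM l z by blast
                show "\<omega> (mu l) z \<in> M" using wM mu K(1) l z by blast
                show "dist (\<omega> l z) (\<omega> (mu l) z) < \<rho>" using mud[OF l z] rho by linarith
              qed
            qed
            finally show "(INF l'\<in>\<Lambda>n. dC0 M (riem_dist M) (\<omega> l) (\<omega>' l')) \<le> ereal \<eta>" .
          qed
          have B: "(SUP l'\<in>\<Lambda>n. INF l\<in>\<Lambda>. dC0 M (riem_dist M) (\<omega> l) (\<omega>' l')) \<le> ereal \<eta>"
          proof (rule SUP_least)
            fix l' assume l': "l' \<in> \<Lambda>n"
            show "(INF l\<in>\<Lambda>. dC0 M (riem_dist M) (\<omega> l) (\<omega>' l')) \<le> ereal \<eta>"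
            proof (cases "\<exists>j<n. l' = e j")
              case True
              then obtain j where j: "l' = e j" by blast
              have "(INF l\<in>\<Lambda>. dC0 M (riem_dist M) (\<omega> l) (\<omega>' l')) \<le> dC0 M (riem_dist M) (\<omega> (\<mu> j)) (\<omega>' l')"
                by (rule INF_lower) (rule muL)
              also have "\<dots> \<le> ereal \<eta>" unfolding j we by (rule dC0_le) (rule Ggood)
              finally show ?thesis .
            next
              case False
              then obtain i where i: "i < length ks" "l' = f i" using memb[OF l'] by blast
              have "(INF l\<in>\<Lambda>. dC0 M (riem_dist M) (\<omega> l) (\<omega>' l')) \<le> dC0 M (riem_dist M) (\<omega> (ks ! i)) (\<omega>' l')"
                by (rule INF_lower) (rule ksL[OF i(1)])
              also have "\<dots> \<le> ereal \<eta>" unfolding i(2) wf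
                by (rule dC0_le) (use good_path_const wM ksL[OF i(1)] eta(1) in blast)
              finally show ?thesis .
            qed
          qed
          have "ereal \<eta> \<le> ereal \<delta>1" using eta by simp
          then show ?thesis unfolding dH_def using A B by (meson max.boundedI order_trans)
        qed
        have sig: "\<forall>k. \<mu> k \<in> \<Lambda> \<and> \<sigma>' k \<in> \<Lambda>n"
          using muL idx unfolding \<sigma>'_def \<Lambda>n_def by auto
        have comp: "\<forall>k. dC0 M (riem_dist M) (\<omega> (\<mu> k)) (\<omega>' (\<sigma>' k)) < ereal \<delta>1"
        proof
          fix k
          have "dC0 M (riem_dist M) (\<omega> (\<mu> k)) (\<omega>' (\<sigma>' k)) \<le> ereal \<eta>"
          proof (cases "k < n")
            case True
            then have "\<omega>' (\<sigma>' k) = G k" by (simp add: \<sigma>'_def we)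
            then show ?thesis by (simp only:) (rule dC0_le, rule Ggood)
          next
            case False
            have "\<omega>' (\<sigma>' k) = \<omega> (\<mu> k)" using False idx[OF muL(2)] by (simp add: \<sigma>'_def wf)
            then show ?thesis by (simp only:) (rule dC0_le, use good_path_const wM muL eta(1) in blast)
          qed
          also have "\<dots> < ereal \<delta>1" using eta by simp
          finally show "dC0 M (riem_dist M) (\<omega> (\<mu> k)) (\<omega>' (\<sigma>' k)) < ereal \<delta>1" .
        qed
        obtain h where h: "h ` M \<subseteq> M"
          "\<And>k. dC0 M (riem_dist M) (omega_seq \<omega> \<mu> k \<circ> h) (omega_seq \<omega>' \<sigma>' k) < ereal (\<epsilon>/2)"
          using ST[rule_format, OF conjI[OF IFS dH], of \<mu> \<sigma>'] sig comp by blast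
        have traj: "k \<le> n \<Longrightarrow> omega_seq \<omega>' \<sigma>' k (x 0) = x k" for k
        proof (induction k)
          case 0 then show ?case by simp
        next
          case (Suc k)
          then have "k < n" by simp
          then show ?case using Suc Phi(3)[of k] by (simp add: \<sigma>'_def we G_def)
        qed
        have x0: "x 0 \<in> M" by (rule xM)
        show ?thesis
        proof (intro bexI[of _ "h (x 0)"] allI impI)
          show "h (x 0) \<in> M" using h(1) x0 by blast
          fix k assume "k \<le> n"
          have "riem_dist M ((omega_seq \<omega> \<mu> k \<circ> h) (x 0)) (omega_seq \<omega>' \<sigma>' k (x 0))
                \<le> dC0 M (riem_dist M) (omega_seq \<omega> \<mu> k \<circ> h) (omega_seq \<omega>' \<sigma>' k)"
            by (rule dC0_ge[OF x0])
          also have "\<dots> < ereal (\<epsilon>/2)" by (rule h(2))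
          finally show "riem_dist M (omega_seq \<omega> \<mu> k (h (x 0))) (x k) < ereal (\<epsilon>/2)"
            using traj[OF \<open>k \<le> n\<close>] by simp
        qed
      qed
      then obtain zf where zf: "\<And>n. zf n \<in> M"
        "\<And>n k. k \<le> n \<Longrightarrow> riem_dist M (omega_seq \<omega> \<mu> k (zf n)) (x k) < ereal (\<epsilon>/2)"
        by metis
      obtain zl r where zl: "zl \<in> M" "strict_mono r" "(zf \<circ> r) \<longlonglongrightarrow> zl"
        using seq_compactE[OF compact_imp_seq_compact[OF cpt], of zf] zf(1) by blast
      define y where "y k = omega_seq \<omega> \<mu> k zl" for k
      have osp: "continuous_on M (omega_seq \<omega> \<mu> k) \<and> omega_seq \<omega> \<mu> k ` M \<subseteq> M" for k
        by (rule omega_seq_props[OF wprops muL(1)])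
      have yM: "y k \<in> M" for k using osp zl(1) unfolding y_def by blast
      show "\<exists>y. is_chain M \<Lambda> \<omega> y \<and> (\<forall>k. riem_dist M (x k) (y k) < ereal \<epsilon>)"
      proof (intro exI[of _ y] conjI allI)
        show "is_chain M \<Lambda> \<omega> y" unfolding is_chain_def
          using yM muL by (auto simp: y_def)
        fix k
        have lim: "(\<lambda>n. omega_seq \<omega> \<mu> k ((zf \<circ> r) n)) \<longlonglongrightarrow> y k"
          unfolding y_def
          by (rule continuous_on_tendsto_compose[OF conjunct1[OF osp] zl(3) zl(1)]) (use zf(1) in simp)
        then have ev1: "\<forall>\<^sub>F n in sequentially. dist (omega_seq \<omega> \<mu> k ((zf \<circ> r) n)) (y k) < \<rho>"
          using rho tendstoD by blast
        have ev2: "\<forall>\<^sub>F n in sequentially. k \<le> n" by (rule eventually_ge_at_top)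
        obtain N where N: "dist (omega_seq \<omega> \<mu> k ((zf \<circ> r) N)) (y k) < \<rho>" "k \<le> N"
          using eventually_happens'[OF _ eventually_conj[OF ev1 ev2]] by auto
        define Y where "Y = omega_seq \<omega> \<mu> k (zf (r N))"
        have YM: "Y \<in> M" using osp zf(1) unfolding Y_def by blast
        have kr: "k \<le> r N" using N(2) seq_suble[OF zl(2), of N] by simp
        have g1: "good_path M (x k) Y (\<epsilon>/2)"
          using zf(2)[OF kr] riem_less_iff good_path_rev unfolding Y_def by blast
        have g2: "good_path M Y (y k) \<eta>"
          using closeg[OF YM yM] N(1) unfolding Y_def by simp
        have "good_path M (x k) (y k) (\<epsilon>/2 + \<eta>)" by (rule good_path_join[OF g1 g2])
        then have "good_path M (x k) (y k) \<epsilon>" by (rule good_path_mono) (use eta in simp)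
        then show "riem_dist M (x k) (y k) < ereal \<epsilon>" by (rule good_path_riem)
      qed
    qed
  qed
qed

end
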